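(* Let $\mathcal{P}\subseteq\mathbb{R}^{m\times m}$ and $n\ge1$. For a family $\{P_{i,j}\}_{i,j\in[n]}$ of $m\times m$ matrices, let $\mathbf{P}\in\mathbb{R}^{nm\times nm}$ be the block matrix whose $(i,j)$-th block is $P_{i,j}$. Let $$S''=\{\{P_{i,j}\}_{i,j\in[n]}:\operatorname{rank}(\mathbf{P})=m,\ P_{i,j}\in\mathcal{P}\ \forall i,j\in[n],\ P_{i,i}=I\ \forall i\in[n]\},$$ and let $S$ be the set of families $\{P_{i,j}\}_{i,j\in[n]}$ with $P_{i,j}\in\mathcal{P}$, $P_{i,k}P_{k,j}=P_{i,j}$ for all $i,j,k\in[n]$, and $P_{i,i}=I$ for all $i\in[n]$. Then $S''=S$.
   Context: $[n]=\{1,\dots,n\}$. *)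

theory Defs
  imports "HOL-Analysis.Analysis"
begin

definition block_matrix :: "('n::finite \<Rightarrow> 'n \<Rightarrow> real^'m::finite^'m) \<Rightarrow> real^('n \<times> 'm)^('n \<times> 'm)" where
  "block_matrix P = (\<chi> r. \<chi> c. P (fst r) (fst c) $ snd r $ snd c)"

end

theory Submission
  imports Defs
begin
lemma ax: "dim (range (\<lambda>a. axis a (1::real)) :: (real^'m::finite) set) = CARD('m)"
proof -
  have e: "range (\<lambda>a. axis a (1::real)) = (Basis :: (real^'m) set)"
    by (auto simp: Basis_vec_def)
  have "dim (Basis :: (real^'m) set) = dim (span (Basis :: (real^'m) set))" by (rule dim_span[symmetric])
  also have "... = dim (UNIV :: (real^'m) set)" by (simp only: span_Basis)
  also have "... = CARD('m)" by simp
  finally show ?thesis using e by simp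
qed
lemma rep: fixes f :: "'m::finite \<Rightarrow> 'v::real_vector"
  assumes "x \<in> span (range f)" shows "\<exists>c. x = (\<Sum>b\<in>UNIV. c b *\<^sub>R f b)"
proof -
  let ?S = "{x. \<exists>c. x = (\<Sum>b\<in>UNIV. c b *\<^sub>R f b)}"
  have "subspace ?S" unfolding subspace_def
  proof (intro conjI ballI allI)
    show "0 \<in> ?S" by (auto intro: exI[of _ "\<lambda>_. 0"])
  next
    fix x y assume "x \<in> ?S" "y \<in> ?S"
    then obtain c d where "x = (\<Sum>b\<in>UNIV. c b *\<^sub>R f b)" "y = (\<Sum>b\<in>UNIV. d b *\<^sub>R f b)" by auto
    then show "x + y \<in> ?S"
      by (auto intro!: exI[of _ "\<lambda>b. c b + d b"] simp: sum.distrib scaleR_add_left)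
  next
    fix r and x assume "x \<in> ?S"
    then obtain c where "x = (\<Sum>b\<in>UNIV. c b *\<^sub>R f b)" by auto
    then show "r *\<^sub>R x \<in> ?S"
      by (auto intro!: exI[of _ "\<lambda>b. r * c b"] simp: scaleR_sum_right)
  qed
  moreover have "range f \<subseteq> ?S"
  proof
    fix y assume "y \<in> range f"
    then obtain a where "y = f a" by auto
    have "(\<Sum>b\<in>UNIV. (if b = a then 1 else 0) *\<^sub>R f b) = (\<Sum>b\<in>UNIV. if b = a then f b else 0)"
      by (rule sum.cong) auto
    then show "y \<in> ?S" using \<open>y = f a\<close>
      by (auto intro!: exI[of _ "\<lambda>b. if b = a then 1 else 0"])
  qed
  ultimately show ?thesis using assms span_minimal by blast
qed
lemma bm_comp: "row r (block_matrix P) $ c = P (fst r) (fst c) $ snd r $ snd c"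
  by (simp add: block_matrix_def row_def)

lemma low:
  fixes P :: "'n::finite \<Rightarrow> 'n \<Rightarrow> real^'m::finite^'m"
  assumes "P k k = mat 1"
  shows "CARD('m) \<le> dim (range (\<lambda>a. row (k,a) (block_matrix P)))"
proof -
  define L :: "real^('n \<times> 'm) \<Rightarrow> real^'m" where "L = (\<lambda>v. \<chi> c. v $ (k,c))"
  have lin: "linear L" unfolding L_def
    by (rule linearI) (auto simp: vec_eq_iff)
  have "L ` range (\<lambda>a. row (k,a) (block_matrix P)) = range (\<lambda>a. axis a (1::real))"
    using assms by (auto simp: L_def bm_comp vec_eq_iff axis_def mat_def image_iff)
  then have "CARD('m) = dim (L ` range (\<lambda>a. row (k,a) (block_matrix P)))" using ax[where 'm='m] by simp
  also have "... \<le> dim (range (\<lambda>a. row (k,a) (block_matrix P)))" by (rule dim_image_le[OF lin])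
  finally show ?thesis .
qed

lemma vec_eqI: "(\<And>i. x $ i = y $ i) \<Longrightarrow> x = y" by (simp add: vec_eq_iff)

theorem lemma14:
  fixes PP :: "(real^'m::finite^'m) set"
  shows "{P :: 'n::finite \<Rightarrow> 'n \<Rightarrow> real^'m^'m.
            rank (block_matrix P) = CARD('m) \<and> (\<forall>i j. P i j \<in> PP) \<and> (\<forall>i. P i i = mat 1)}
       = {P :: 'n \<Rightarrow> 'n \<Rightarrow> real^'m^'m.
            (\<forall>i j. P i j \<in> PP) \<and> (\<forall>i j k. P i k ** P k j = P i j) \<and> (\<forall>i. P i i = mat 1)}"
proof (rule set_eqI, rule iffI)
  fix P :: "'n \<Rightarrow> 'n \<Rightarrow> real^'m^'m"
  define B where "B = block_matrix P"
  have rowsB: "rows B = range (\<lambda>r. row r B)" by (auto simp: rows_def)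
  {
    assume A: "P \<in> {P :: 'n::finite \<Rightarrow> 'n \<Rightarrow> real^'m^'m.
            rank (block_matrix P) = CARD('m) \<and> (\<forall>i j. P i j \<in> PP) \<and> (\<forall>i. P i i = mat 1)}"
    have cons: "P i k ** P k j = P i j" for i j k
    proof -
      let ?R = "range (\<lambda>a. row (k,a) B)"
      have sub: "?R \<subseteq> rows B" unfolding rowsB by auto
      have "dim (rows B) = CARD('m)" using A by (simp add: B_def row_rank_def)
      also have "... \<le> dim ?R" using low[of P k] A by (simp add: B_def)
      finally have "span ?R = span (rows B)" using sub dim_eq_span by blast
      show ?thesis
      proof (rule vec_eqI, rule vec_eqI)
        fix a e
        have "row (i,a) B \<in> span ?R" using \<open>span ?R = span (rows B)\<close> rowsB
          by (metis rangeI span_base)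
        then obtain c where c: "row (i,a) B = (\<Sum>b\<in>UNIV. c b *\<^sub>R row (k,b) B)"
          using rep by blast
        have comp: "P i j' $ a $ e' = (\<Sum>b\<in>UNIV. c b * P k j' $ b $ e')" for j' e'
        proof -
          have "P i j' $ a $ e' = row (i,a) B $ (j',e')" by (simp add: B_def bm_comp)
          also have "... = (\<Sum>b\<in>UNIV. c b * P k j' $ b $ e')"
            by (subst c) (simp add: sum_component B_def bm_comp)
          finally show ?thesis .
        qed
        have cd: "c d = P i k $ a $ d" for d
        proof -
          have "P i k $ a $ d = (\<Sum>b\<in>UNIV. c b * (if b = d then 1 else 0))"
            using comp[of k d] A by (simp add: mat_def)
          also have "... = c d" by (simp add: if_distrib cong: if_cong)
          finally show ?thesis by simp
        qed
        show "(P i k ** P k j) $ a $ e = P i j $ a $ e"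
          using comp[of j e] by (simp add: matrix_matrix_mult_def cd)
      qed
    qed
    then show "P \<in> {P :: 'n \<Rightarrow> 'n \<Rightarrow> real^'m^'m.
            (\<forall>i j. P i j \<in> PP) \<and> (\<forall>i j k. P i k ** P k j = P i j) \<and> (\<forall>i. P i i = mat 1)}"
      using A by auto
  }
  {
    assume A: "P \<in> {P :: 'n \<Rightarrow> 'n \<Rightarrow> real^'m^'m.
            (\<forall>i j. P i j \<in> PP) \<and> (\<forall>i j k. P i k ** P k j = P i j) \<and> (\<forall>i. P i i = mat 1)}"
    obtain k :: 'n where True by simp
    let ?R = "range (\<lambda>a. row (k,a) B)"
    have sub: "?R \<subseteq> rows B" unfolding rowsB by auto
    have "CARD('m) \<le> dim ?R" using low[of P k] A by (simp add: B_def)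
    also have "... \<le> dim (rows B)" using sub by (rule dim_subset)
    finally have ge: "CARD('m) \<le> dim (rows B)" .
    have "rows B \<subseteq> span ?R"
    proof
      fix x assume "x \<in> rows B"
      then obtain i a where x: "x = row (i,a) B" unfolding rowsB by auto
      have "x = (\<Sum>b\<in>UNIV. P i k $ a $ b *\<^sub>R row (k,b) B)"
      proof (rule vec_eqI)
        fix r :: "'n \<times> 'm"
        obtain j e where r: "r = (j,e)" by (cases r)
        have "x $ r = (P i k ** P k j) $ a $ e" using A x r by (simp add: B_def bm_comp)
        also have "... = (\<Sum>b\<in>UNIV. P i k $ a $ b *\<^sub>R row (k,b) B) $ r"
          by (simp add: sum_component B_def bm_comp r matrix_matrix_mult_def)
        finally show "x $ r = (\<Sum>b\<in>UNIV. P i k $ a $ b *\<^sub>R row (k,b) B) $ r" .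
      qed
      also have "... \<in> span ?R"
        by (intro span_sum span_mul span_base) auto
      finally show "x \<in> span ?R" .
    qed
    then have "dim (rows B) \<le> card ?R" by (rule dim_le_card) simp
    also have "... \<le> CARD('m)" by (rule card_image_le) simp
    finally have "rank B = CARD('m)" using ge by (simp add: row_rank_def)
    then show "P \<in> {P :: 'n::finite \<Rightarrow> 'n \<Rightarrow> real^'m^'m.
            rank (block_matrix P) = CARD('m) \<and> (\<forall>i j. P i j \<in> PP) \<and> (\<forall>i. P i i = mat 1)}"
      using A by (simp add: B_def)
  }
qed

end
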